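(* Let $A$ and $Y$ be Hopf algebras and $\rho:Y\to A\otimes Y$ a linear map. Then $\rho$ makes $Y$ a partial $A$-comodule coalgebra in the Hopf-algebraic sense if and only if it makes $Y$ a partial $A$-comodule coalgebra in the multiplier-Hopf-algebraic sense (both defined below).
   Context: Hopf-algebraic sense: (i) $(\varepsilon_A\otimes\imath_Y)\rho=\imath_Y$; (ii) $(\imath_A\otimes\Delta_Y)\rho=(m_A\otimes\imath_Y\otimes\imath_Y)(\imath_A\otimes\tau_{Y,A}\otimes\imath_Y)(\rho\otimes\rho)\Delta_Y$; (iii) $(\imath_A\otimes\rho)\rho=(m_A\otimes\imath_A\otimes\imath_Y)\{(\imath_A\otimes\varepsilon_Y)\rho\otimes[(\Delta_A\otimes\imath_Y)\rho]\}\Delta_Y$, where $m_A$ is multiplication and $\tau_{Y,A}(y\otimes a)=a\otimes y$. Multiplier-Hopf-algebraic sense (with $M(A\otimes Y)=A\otimes Y$ here): put $T:Y\otimes A\to A\otimes Y$, $T(y\otimes a)=\rho(y)(a\otimes1)$. Then: (i) $(\varepsilon_A\otimes\imath_Y)\rho(y)=y$; (ii) $((\imath_Y\otimes T)(\Delta_Y(y)\otimes a))(1\otimes1\otimes y')$ and $(1\otimes1\otimes y')((\imath_Y\otimes T)(\Delta_Y(y)\otimes a))$ lie in $Y\otimes A\otimes Y$; (iii) $(\imath_A\otimes\Delta_Y)T=(T\otimes\imath_Y)(\imath_Y\otimes T)(\Delta_Y\otimes\imath_A)$; (iv) $(\imath_A\otimes T)(T\otimes\imath_A)(\imath_Y\otimes\Delta_A)=((\imath_A\otimes\varepsilon_Y)T\otimes\imath_A\otimes\imath_Y)(\imath_Y\otimes(\Delta_A\otimes\imath_Y)T)(\Delta_Y\otimes\imath_A)$,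 for all $y,y'\in Y$, $a\in A$. *)

theory Defs
  imports Main "HOL-Library.Poly_Mapping"
begin

(* A vector space over the field 'k is modelled as the free vector space
   'b \<Rightarrow>\<^sub>0 'k on a basis 'b (every vector space has a basis).
   The tensor product of the spaces with bases 'a and 'b is the free space on 'a \<times> 'b;
   iterated tensor products are right-nested: A\<otimes>B\<otimes>C has basis 'a \<times> ('b \<times> 'c). *)

definition smult :: "'k::field \<Rightarrow> ('b \<Rightarrow>\<^sub>0 'k) \<Rightarrow> ('b \<Rightarrow>\<^sub>0 'k)" where
  "smult c v = Poly_Mapping.map (\<lambda>x. c * x) v"

definition bas :: "'b \<Rightarrow> ('b \<Rightarrow>\<^sub>0 'k::field)" where
  "bas i = Poly_Mapping.single i 1"

definition lin :: "('a \<Rightarrow> ('b \<Rightarrow>\<^sub>0 'k::field)) \<Rightarrow> ('a \<Rightarrow>\<^sub>0 'k) \<Rightarrow> ('b \<Rightarrow>\<^sub>0 'k)" where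
  "lin f v = (\<Sum>i\<in>Poly_Mapping.keys v. smult (Poly_Mapping.lookup v i) (f i))"

definition klinear :: "(('a \<Rightarrow>\<^sub>0 'k::field) \<Rightarrow> ('b \<Rightarrow>\<^sub>0 'k)) \<Rightarrow> bool" where
  "klinear f \<longleftrightarrow> (\<forall>v w. f (v + w) = f v + f w) \<and> (\<forall>c v. f (smult c v) = smult c (f v))"

definition kfunctional :: "(('a \<Rightarrow>\<^sub>0 'k::field) \<Rightarrow> 'k) \<Rightarrow> bool" where
  "kfunctional f \<longleftrightarrow> (\<forall>v w. f (v + w) = f v + f w) \<and> (\<forall>c v. f (smult c v) = c * f v)"

definition tens :: "('a \<Rightarrow>\<^sub>0 'k::field) \<Rightarrow> ('b \<Rightarrow>\<^sub>0 'k) \<Rightarrow> ('a \<times> 'b \<Rightarrow>\<^sub>0 'k)" where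
  "tens v w = (\<Sum>i\<in>Poly_Mapping.keys v. \<Sum>j\<in>Poly_Mapping.keys w. Poly_Mapping.single (i, j) (Poly_Mapping.lookup v i * Poly_Mapping.lookup w j))"

definition tmap :: "(('a \<Rightarrow>\<^sub>0 'k::field) \<Rightarrow> ('c \<Rightarrow>\<^sub>0 'k)) \<Rightarrow> (('b \<Rightarrow>\<^sub>0 'k) \<Rightarrow> ('d \<Rightarrow>\<^sub>0 'k))
    \<Rightarrow> ('a \<times> 'b \<Rightarrow>\<^sub>0 'k) \<Rightarrow> ('c \<times> 'd \<Rightarrow>\<^sub>0 'k)" where
  "tmap f g = lin (\<lambda>(i, j). tens (f (bas i)) (g (bas j)))"

(* f \<otimes> e for e a linear functional, with B \<otimes> k identified with B *)
definition tmap_r :: "(('a \<Rightarrow>\<^sub>0 'k::field) \<Rightarrow> ('c \<Rightarrow>\<^sub>0 'k)) \<Rightarrow> (('b \<Rightarrow>\<^sub>0 'k) \<Rightarrow> 'k)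
    \<Rightarrow> ('a \<times> 'b \<Rightarrow>\<^sub>0 'k) \<Rightarrow> ('c \<Rightarrow>\<^sub>0 'k)" where
  "tmap_r f e = lin (\<lambda>(i, j). smult (e (bas j)) (f (bas i)))"

(* e \<otimes> g for e a linear functional, with k \<otimes> B identified with B *)
definition tmap_l :: "(('a \<Rightarrow>\<^sub>0 'k::field) \<Rightarrow> 'k) \<Rightarrow> (('b \<Rightarrow>\<^sub>0 'k) \<Rightarrow> ('d \<Rightarrow>\<^sub>0 'k))
    \<Rightarrow> ('a \<times> 'b \<Rightarrow>\<^sub>0 'k) \<Rightarrow> ('d \<Rightarrow>\<^sub>0 'k)" where
  "tmap_l e g = lin (\<lambda>(i, j). smult (e (bas i)) (g (bas j)))"

definition relabel :: "('a \<Rightarrow> 'b) \<Rightarrow> ('a \<Rightarrow>\<^sub>0 'k::field) \<Rightarrow> ('b \<Rightarrow>\<^sub>0 'k)" where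
  "relabel \<sigma> = lin (\<lambda>b. bas (\<sigma> b))"

definition assoc_r :: "(('a \<times> 'b) \<times> 'c \<Rightarrow>\<^sub>0 'k::field) \<Rightarrow> ('a \<times> ('b \<times> 'c) \<Rightarrow>\<^sub>0 'k)" where
  "assoc_r = relabel (\<lambda>((a, b), c). (a, (b, c)))"

definition assoc_l :: "('a \<times> ('b \<times> 'c) \<Rightarrow>\<^sub>0 'k::field) \<Rightarrow> (('a \<times> 'b) \<times> 'c \<Rightarrow>\<^sub>0 'k)" where
  "assoc_l = relabel (\<lambda>(a, (b, c)). ((a, b), c))"

(* Hopf algebra over 'k: multiplication m, unit element u (unit map c \<mapsto> c u),
   comultiplication D, counit e, antipode S *)
definition hopf_algebra ::
  "(('a \<times> 'a \<Rightarrow>\<^sub>0 'k::field) \<Rightarrow> ('a \<Rightarrow>\<^sub>0 'k)) \<Rightarrow> ('a \<Rightarrow>\<^sub>0 'k) \<Rightarrow> (('a \<Rightarrow>\<^sub>0 'k) \<Rightarrow> ('a \<times> 'a \<Rightarrow>\<^sub>0 'k))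
    \<Rightarrow> (('a \<Rightarrow>\<^sub>0 'k) \<Rightarrow> 'k) \<Rightarrow> (('a \<Rightarrow>\<^sub>0 'k) \<Rightarrow> ('a \<Rightarrow>\<^sub>0 'k)) \<Rightarrow> bool" where
  "hopf_algebra m u D e S \<longleftrightarrow>
     klinear m \<and> klinear D \<and> kfunctional e \<and> klinear S \<and>
     (\<forall>x. m (tmap m id x) = m (tmap id m (assoc_r x))) \<and>
     (\<forall>v. m (tens u v) = v \<and> m (tens v u) = v) \<and>
     (\<forall>v. tmap id D (D v) = assoc_r (tmap D id (D v))) \<and>
     (\<forall>v. tmap_l e id (D v) = v \<and> tmap_r id e (D v) = v) \<and>
     (\<forall>v w. D (m (tens v w)) =
        tmap m m (relabel (\<lambda>((a, b), (c, d)). ((a, c), (b, d))) (tens (D v) (D w)))) \<and>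
     D u = tens u u \<and>
     (\<forall>v w. e (m (tens v w)) = e v * e w) \<and> e u = 1 \<and>
     (\<forall>v. m (tmap S id (D v)) = smult (e v) u \<and> m (tmap id S (D v)) = smult (e v) u)"

definition partial_comodule_coalgebra_hopf ::
  "(('a \<times> 'a \<Rightarrow>\<^sub>0 'k::field) \<Rightarrow> ('a \<Rightarrow>\<^sub>0 'k)) \<Rightarrow> (('a \<Rightarrow>\<^sub>0 'k) \<Rightarrow> ('a \<times> 'a \<Rightarrow>\<^sub>0 'k))
    \<Rightarrow> (('a \<Rightarrow>\<^sub>0 'k) \<Rightarrow> 'k)
    \<Rightarrow> (('y \<Rightarrow>\<^sub>0 'k) \<Rightarrow> ('y \<times> 'y \<Rightarrow>\<^sub>0 'k)) \<Rightarrow> (('y \<Rightarrow>\<^sub>0 'k) \<Rightarrow> 'k)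
    \<Rightarrow> (('y \<Rightarrow>\<^sub>0 'k) \<Rightarrow> ('a \<times> 'y \<Rightarrow>\<^sub>0 'k)) \<Rightarrow> bool" where
  "partial_comodule_coalgebra_hopf mA DA eA DY eY \<rho> \<longleftrightarrow>
     (\<forall>y. tmap_l eA id (\<rho> y) = y) \<and>
     (\<forall>y. tmap id DY (\<rho> y) =
        tmap mA id (relabel (\<lambda>((a, y), (a', y')). ((a, a'), (y, y'))) (tmap \<rho> \<rho> (DY y)))) \<and>
     (\<forall>y. tmap id \<rho> (\<rho> y) =
        tmap mA id (assoc_l
          (tmap (\<lambda>v. tmap_r id eY (\<rho> v)) (\<lambda>v. assoc_r (tmap DA id (\<rho> v))) (DY y))))"

definition mult_AY ::
  "(('a \<times> 'a \<Rightarrow>\<^sub>0 'k::field) \<Rightarrow> ('a \<Rightarrow>\<^sub>0 'k)) \<Rightarrow> (('y \<times> 'y \<Rightarrow>\<^sub>0 'k) \<Rightarrow> ('y \<Rightarrow>\<^sub>0 'k))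
    \<Rightarrow> ('a \<times> 'y \<Rightarrow>\<^sub>0 'k) \<Rightarrow> ('a \<times> 'y \<Rightarrow>\<^sub>0 'k) \<Rightarrow> ('a \<times> 'y \<Rightarrow>\<^sub>0 'k)" where
  "mult_AY mA mY v w = tmap mA mY (relabel (\<lambda>((a, y), (a', y')). ((a, a'), (y, y'))) (tens v w))"

definition mult_YAY ::
  "(('a \<times> 'a \<Rightarrow>\<^sub>0 'k::field) \<Rightarrow> ('a \<Rightarrow>\<^sub>0 'k)) \<Rightarrow> (('y \<times> 'y \<Rightarrow>\<^sub>0 'k) \<Rightarrow> ('y \<Rightarrow>\<^sub>0 'k))
    \<Rightarrow> ('y \<times> 'a \<times> 'y \<Rightarrow>\<^sub>0 'k) \<Rightarrow> ('y \<times> 'a \<times> 'y \<Rightarrow>\<^sub>0 'k) \<Rightarrow> ('y \<times> 'a \<times> 'y \<Rightarrow>\<^sub>0 'k)" where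
  "mult_YAY mA mY v w = tmap mY (tmap mA mY)
     (relabel (\<lambda>((y, a, z), (y', a', z')). ((y, y'), ((a, a'), (z, z')))) (tens v w))"

(* T : Y \<otimes> A \<rightarrow> A \<otimes> Y,  T(y \<otimes> a) = \<rho>(y)(a \<otimes> 1), extended linearly *)
definition Tmap ::
  "(('a \<times> 'a \<Rightarrow>\<^sub>0 'k::field) \<Rightarrow> ('a \<Rightarrow>\<^sub>0 'k)) \<Rightarrow> (('y \<times> 'y \<Rightarrow>\<^sub>0 'k) \<Rightarrow> ('y \<Rightarrow>\<^sub>0 'k)) \<Rightarrow> ('y \<Rightarrow>\<^sub>0 'k)
    \<Rightarrow> (('y \<Rightarrow>\<^sub>0 'k) \<Rightarrow> ('a \<times> 'y \<Rightarrow>\<^sub>0 'k)) \<Rightarrow> ('y \<times> 'a \<Rightarrow>\<^sub>0 'k) \<Rightarrow> ('a \<times> 'y \<Rightarrow>\<^sub>0 'k)" where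
  "Tmap mA mY uY \<rho> = lin (\<lambda>(j, i). mult_AY mA mY (\<rho> (bas j)) (tens (bas i) uY))"

(* Partial A-comodule coalgebra in the multiplier-Hopf-algebraic sense (M(A\<otimes>Y) = A\<otimes>Y) *)
definition partial_comodule_coalgebra_mult ::
  "(('a \<times> 'a \<Rightarrow>\<^sub>0 'k::field) \<Rightarrow> ('a \<Rightarrow>\<^sub>0 'k)) \<Rightarrow> ('a \<Rightarrow>\<^sub>0 'k) \<Rightarrow> (('a \<Rightarrow>\<^sub>0 'k) \<Rightarrow> ('a \<times> 'a \<Rightarrow>\<^sub>0 'k))
    \<Rightarrow> (('a \<Rightarrow>\<^sub>0 'k) \<Rightarrow> 'k)
    \<Rightarrow> (('y \<times> 'y \<Rightarrow>\<^sub>0 'k) \<Rightarrow> ('y \<Rightarrow>\<^sub>0 'k)) \<Rightarrow> ('y \<Rightarrow>\<^sub>0 'k)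
    \<Rightarrow> (('y \<Rightarrow>\<^sub>0 'k) \<Rightarrow> ('y \<times> 'y \<Rightarrow>\<^sub>0 'k)) \<Rightarrow> (('y \<Rightarrow>\<^sub>0 'k) \<Rightarrow> 'k)
    \<Rightarrow> (('y \<Rightarrow>\<^sub>0 'k) \<Rightarrow> ('a \<times> 'y \<Rightarrow>\<^sub>0 'k)) \<Rightarrow> bool" where
  "partial_comodule_coalgebra_mult mA uA DA eA mY uY DY eY \<rho> \<longleftrightarrow>
     (let T = Tmap mA mY uY \<rho> in
     (\<forall>y. tmap_l eA id (\<rho> y) = y) \<and>
     (\<forall>y y' a.
        mult_YAY mA mY (tmap id T (assoc_r (tens (DY y) a))) (tens uY (tens uA y'))
          \<in> (UNIV :: ('y \<times> 'a \<times> 'y \<Rightarrow>\<^sub>0 'k) set) \<and>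
        mult_YAY mA mY (tens uY (tens uA y')) (tmap id T (assoc_r (tens (DY y) a)))
          \<in> (UNIV :: ('y \<times> 'a \<times> 'y \<Rightarrow>\<^sub>0 'k) set)) \<and>
     (\<forall>x. tmap id DY (T x) =
        assoc_r (tmap T id (assoc_l (tmap id T (assoc_r (tmap DY id x)))))) \<and>
     (\<forall>x. tmap id T (assoc_r (tmap T id (assoc_l (tmap id DA x)))) =
        tmap (\<lambda>v. tmap_r id eY (T v)) id
          (assoc_l (tmap id (\<lambda>v. assoc_r (tmap DA id (T v))) (assoc_r (tmap DY id x))))))"

end

theory Submission
  imports Defs
begin

lemma lookup_smult[simp]: "Poly_Mapping.lookup (smult c v) i = c * Poly_Mapping.lookup v i"
  by (simp add: smult_def Poly_Mapping.map.rep_eq when_def)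

lemma smult_zero[simp]: "smult c 0 = 0" "smult 0 v = 0"
  by (rule poly_mapping_eqI, simp)+
lemma smult_one[simp]: "smult 1 v = v" by (rule poly_mapping_eqI, simp)
lemma smult_add: "smult c (v + w) = smult c v + smult c w"
  by (rule poly_mapping_eqI, simp add: lookup_add algebra_simps)
lemma smult_add2: "smult (c + d) v = smult c v + smult d v"
  by (rule poly_mapping_eqI, simp add: lookup_add algebra_simps)
lemma smult_smult[simp]: "smult c (smult d v) = smult (c * d) v"
  by (rule poly_mapping_eqI, simp)
lemma smult_sum: "smult c (sum f S) = (\<Sum>i\<in>S. smult c (f i))"
  by (rule poly_mapping_eqI, simp add: lookup_sum sum_distrib_left)

lemma lookup_bas: "Poly_Mapping.lookup (bas i) j = (if i = j then 1 else 0)"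
  by (simp add: bas_def lookup_single when_def)
lemma keys_bas[simp]: "Poly_Mapping.keys (bas i :: 'b \<Rightarrow>\<^sub>0 'k::field) = {i}"
  by (simp add: bas_def)

lemma lin_superset:
  assumes "finite S" "Poly_Mapping.keys v \<subseteq> S"
  shows "lin f v = (\<Sum>i\<in>S. smult (Poly_Mapping.lookup v i) (f i))"
  unfolding lin_def
  by (rule sum.mono_neutral_left) (use assms in \<open>auto simp: in_keys_iff\<close>)


lemma lin_add: "lin f (v + w) = lin f v + lin f w"
proof -
  let ?S = "Poly_Mapping.keys v \<union> Poly_Mapping.keys w"
  have "Poly_Mapping.keys (v + w) \<subseteq> ?S" by (rule keys_add)
  then show ?thesis
    by (simp add: lin_superset[of ?S] lookup_add smult_add2 sum.distrib)
qed

lemma lin_smult: "lin f (smult c v) = smult c (lin f v)"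
proof -
  have "Poly_Mapping.keys (smult c v) \<subseteq> Poly_Mapping.keys v" by (auto simp: in_keys_iff)
  then show ?thesis
    by (simp add: lin_superset[of "Poly_Mapping.keys v"] smult_sum)
qed

lemma lin_bas[simp]: "lin f (bas i) = f i"
  by (simp add: lin_def lookup_bas)

lemma lin_zero[simp]: "lin f 0 = 0" by (simp add: lin_def)

lemma klinear_lin[simp]: "klinear (lin f)"
  by (simp add: klinear_def lin_add lin_smult)

lemma klinear_zero: "klinear f \<Longrightarrow> f 0 = 0"
  unfolding klinear_def by (metis smult_zero(2))

lemma klinear_sum: "klinear f \<Longrightarrow> f (sum g S) = (\<Sum>i\<in>S. f (g i))"
proof (induction S rule: infinite_finite_induct)
  case (insert x F)
  then show ?case by (simp add: klinear_def)
qed (auto simp: klinear_zero)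

lemma decomp: "v = (\<Sum>i\<in>Poly_Mapping.keys v. smult (Poly_Mapping.lookup v i) (bas i))"
proof (rule poly_mapping_eqI)
  fix k
  have "(\<Sum>x\<in>Poly_Mapping.keys v. Poly_Mapping.lookup v x * (if x = k then 1 else 0))
       = (\<Sum>x\<in>Poly_Mapping.keys v. if x = k then Poly_Mapping.lookup v x else 0)"
    by (rule sum.cong) auto
  also have "\<dots> = Poly_Mapping.lookup v k" by (simp add: sum.delta in_keys_iff)
  finally show "Poly_Mapping.lookup v k = Poly_Mapping.lookup (\<Sum>i\<in>Poly_Mapping.keys v. smult (Poly_Mapping.lookup v i) (bas i)) k"
    by (simp add: lookup_sum lookup_bas)
qed

lemma lin_unique: "klinear f \<Longrightarrow> f v = lin (\<lambda>i. f (bas i)) v"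
proof -
  assume f: "klinear f"
  have "f v = f (\<Sum>i\<in>Poly_Mapping.keys v. smult (Poly_Mapping.lookup v i) (bas i))"
    by (rule arg_cong[OF decomp])
  also have "\<dots> = (\<Sum>i\<in>Poly_Mapping.keys v. f (smult (Poly_Mapping.lookup v i) (bas i)))"
    by (rule klinear_sum[OF f, of "\<lambda>i. smult (Poly_Mapping.lookup v i) (bas i)" "Poly_Mapping.keys v"])
  also have "\<dots> = (\<Sum>i\<in>Poly_Mapping.keys v. smult (Poly_Mapping.lookup v i) (f (bas i)))"
    using f unfolding klinear_def by simp
  finally show ?thesis by (simp add: lin_def)
qed

lemma lin_ext:
  assumes "klinear f" "klinear g" "\<And>i. f (bas i) = g (bas i)"
  shows "f v = g v"
proof -
  have "f v = lin (\<lambda>i. f (bas i)) v" by (rule lin_unique[OF assms(1)])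
  also have "\<dots> = lin (\<lambda>i. g (bas i)) v" using assms(3) by simp
  also have "\<dots> = g v" by (rule lin_unique[OF assms(2), symmetric])
  finally show ?thesis .
qed

lemma lin_fun_add: "lin (\<lambda>i. f i + g i) v = lin f v + lin g v"
  by (simp add: lin_def smult_add sum.distrib)
lemma lin_fun_smult: "lin (\<lambda>i. smult c (f i)) v = smult c (lin f v)"
  by (simp add: lin_def smult_sum mult.commute)


lemma lookup_tens: "Poly_Mapping.lookup (tens v w) p = Poly_Mapping.lookup v (fst p) * Poly_Mapping.lookup w (snd p)"
proof -
  obtain i j where p: "p = (i, j)" by (cases p)
  have inner: "(\<Sum>b\<in>Poly_Mapping.keys w. (Poly_Mapping.lookup v a * Poly_Mapping.lookup w b when a = i \<and> b = j))
      = (if a = i then Poly_Mapping.lookup v a * Poly_Mapping.lookup w j else 0)" for a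
  proof -
    have "(\<Sum>b\<in>Poly_Mapping.keys w. (Poly_Mapping.lookup v a * Poly_Mapping.lookup w b when a = i \<and> b = j))
       = (\<Sum>b\<in>Poly_Mapping.keys w. if b = j then (if a = i then Poly_Mapping.lookup v a * Poly_Mapping.lookup w b else 0) else 0)"
      by (rule sum.cong) (auto simp: when_def)
    also have "\<dots> = (if a = i then Poly_Mapping.lookup v a * Poly_Mapping.lookup w j else 0)"
      by (simp add: sum.delta in_keys_iff)
    finally show ?thesis .
  qed
  have "Poly_Mapping.lookup (tens v w) p = (\<Sum>a\<in>Poly_Mapping.keys v. if a = i then Poly_Mapping.lookup v a * Poly_Mapping.lookup w j else 0)"
    unfolding tens_def p by (simp add: lookup_sum lookup_single inner)
  also have "\<dots> = Poly_Mapping.lookup v i * Poly_Mapping.lookup w j"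
    by (simp add: sum.delta in_keys_iff)
  finally show ?thesis by (simp add: p)
qed

lemma lookup_relabel_gen:
  assumes "inj \<sigma>" "\<sigma> (\<tau> q) = q"
  shows "Poly_Mapping.lookup (relabel \<sigma> v) q = Poly_Mapping.lookup v (\<tau> q)"
proof -
  have "Poly_Mapping.lookup (relabel \<sigma> v) q = (\<Sum>b\<in>Poly_Mapping.keys v. Poly_Mapping.lookup v b * (if \<sigma> b = q then 1 else 0))"
    by (simp add: relabel_def lin_def lookup_sum lookup_bas eq_commute)
  also have "\<dots> = (\<Sum>b\<in>Poly_Mapping.keys v. if b = \<tau> q then Poly_Mapping.lookup v b else 0)"
    by (rule sum.cong) (use assms in \<open>auto simp: inj_eq[symmetric]\<close>)
  also have "\<dots> = Poly_Mapping.lookup v (\<tau> q)" by (simp add: sum.delta in_keys_iff)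
  finally show ?thesis .
qed

lemma lookup_assoc_r: "Poly_Mapping.lookup (assoc_r v) p = Poly_Mapping.lookup v ((fst p, fst (snd p)), snd (snd p))"
  unfolding assoc_r_def
  by (rule lookup_relabel_gen) (auto simp: inj_def)

lemma lookup_assoc_l: "Poly_Mapping.lookup (assoc_l v) p = Poly_Mapping.lookup v (fst (fst p), snd (fst p), snd p)"
  unfolding assoc_l_def
  by (rule lookup_relabel_gen) (auto simp: inj_def)

lemma lookup_swap: "Poly_Mapping.lookup (relabel (\<lambda>((a, b), (c, d)). ((a, c), (b, d))) v) p
   = Poly_Mapping.lookup v ((fst (fst p), fst (snd p)), (snd (fst p), snd (snd p)))"
  by (rule lookup_relabel_gen) (auto simp: inj_def)

lemma tens_add1: "tens (v + v') w = tens v w + tens v' w"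
  by (rule poly_mapping_eqI) (simp add: lookup_tens lookup_add algebra_simps)
lemma tens_add2: "tens v (w + w') = tens v w + tens v w'"
  by (rule poly_mapping_eqI) (simp add: lookup_tens lookup_add algebra_simps)
lemma tens_smult1: "tens (smult c v) w = smult c (tens v w)"
  by (rule poly_mapping_eqI) (simp add: lookup_tens algebra_simps)
lemma tens_smult2: "tens v (smult c w) = smult c (tens v w)"
  by (rule poly_mapping_eqI) (simp add: lookup_tens algebra_simps)
lemma tens_zero[simp]: "tens 0 w = 0" "tens v 0 = 0"
  by (rule poly_mapping_eqI, simp add: lookup_tens)+
lemma tens_bas: "tens (bas i) (bas j) = bas (i, j)"
  by (rule poly_mapping_eqI) (auto simp: lookup_tens lookup_bas)

lemma assoc_r_tens[simp]: "assoc_r (tens (tens u v) w) = tens u (tens v w)"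
  by (rule poly_mapping_eqI) (simp add: lookup_tens lookup_assoc_r)
lemma assoc_l_tens[simp]: "assoc_l (tens u (tens v w)) = tens (tens u v) w"
  by (rule poly_mapping_eqI) (simp add: lookup_tens lookup_assoc_l)
lemma assoc_rl[simp]: "assoc_r (assoc_l v) = v"
  by (rule poly_mapping_eqI) (simp add: lookup_assoc_l lookup_assoc_r)
lemma swap_tens[simp]: "relabel (\<lambda>((a, b), (c, d)). ((a, c), (b, d))) (tens (tens a b) (tens c d))
   = tens (tens a c) (tens b d)"
  by (rule poly_mapping_eqI) (simp add: lookup_tens lookup_swap)

lemma klinear_tens1[simp]: "klinear (\<lambda>v. tens v w)"
  by (simp add: klinear_def tens_add1 tens_smult1)
lemma klinear_tens2[simp]: "klinear (\<lambda>w. tens v w)"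
  by (simp add: klinear_def tens_add2 tens_smult2)

lemma tmap_bas: "tmap f g (bas (i, j)) = tens (f (bas i)) (g (bas j))"
  by (simp add: tmap_def)
lemma klinear_tmap[simp]: "klinear (tmap f g)" by (simp add: tmap_def)
lemma klinear_relabel[simp]: "klinear (relabel f)" by (simp add: relabel_def)
lemma klinear_assoc_r[simp]: "klinear assoc_r" by (simp add: assoc_r_def)
lemma klinear_assoc_l[simp]: "klinear assoc_l" by (simp add: assoc_l_def)
lemma klinear_tmap_r[simp]: "klinear (tmap_r f e)" by (simp add: tmap_r_def)
lemma klinear_tmap_l[simp]: "klinear (tmap_l e f)" by (simp add: tmap_l_def)
lemma klinear_Tmap[simp]: "klinear (Tmap mA mY uY \<rho>)" by (simp add: Tmap_def)

lemma klinear_comp: "klinear f \<Longrightarrow> klinear g \<Longrightarrow> klinear (\<lambda>x. f (g x))"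
  by (simp add: klinear_def)
lemma klinear_id[simp]: "klinear id" "klinear (\<lambda>x. x)" by (simp_all add: klinear_def)

lemma klinear_add: "klinear f \<Longrightarrow> f (v + w) = f v + f w" by (simp add: klinear_def)
lemma klinear_smult: "klinear f \<Longrightarrow> f (smult c v) = smult c (f v)" by (simp add: klinear_def)

lemmas tmap_add = klinear_add[OF klinear_tmap]
lemmas tmap_smult = klinear_smult[OF klinear_tmap]
lemmas relabel_add = klinear_add[OF klinear_relabel]
lemmas relabel_smult = klinear_smult[OF klinear_relabel]
lemmas assoc_r_add = klinear_add[OF klinear_assoc_r]
lemmas assoc_r_smult = klinear_smult[OF klinear_assoc_r]
lemmas assoc_l_add = klinear_add[OF klinear_assoc_l]
lemmas assoc_l_smult = klinear_smult[OF klinear_assoc_l]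
lemmas tmap_r_add = klinear_add[OF klinear_tmap_r]
lemmas tmap_r_smult = klinear_smult[OF klinear_tmap_r]
lemmas tmap_l_add = klinear_add[OF klinear_tmap_l]
lemmas tmap_l_smult = klinear_smult[OF klinear_tmap_l]
lemmas Tmap_add = klinear_add[OF klinear_Tmap]
lemmas Tmap_smult = klinear_smult[OF klinear_Tmap]

lemmas lsimps = tmap_add tmap_smult relabel_add relabel_smult assoc_r_add assoc_r_smult
  assoc_l_add assoc_l_smult tmap_r_add tmap_r_smult tmap_l_add tmap_l_smult Tmap_add Tmap_smult
  tens_add1 tens_add2 tens_smult1 tens_smult2 lin_add lin_smult smult_add

lemma tmap_tens:
  assumes f: "klinear f" and g: "klinear g"
  shows "tmap f g (tens v w) = tens (f v) (g w)"
proof -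
  have hb: "tmap f g (tens (bas i) w) = tens (f (bas i)) (g w)" for i
    by (rule lin_ext[where f="\<lambda>w. tmap f g (tens (bas i) w)" and g="\<lambda>w. tens (f (bas i)) (g w)"])
       (use g in \<open>simp_all add: klinear_def lsimps tens_bas tmap_bas\<close>)
  show ?thesis
    by (rule lin_ext[where f="\<lambda>v. tmap f g (tens v w)" and g="\<lambda>v. tens (f v) (g w)"])
       (use f hb in \<open>simp_all add: klinear_def lsimps\<close>)
qed


lemma lin_ext_tens:
  assumes "klinear F" "klinear G" "\<And>v w. F (tens v w) = G (tens v w)"
  shows "F x = G x"
proof (rule lin_ext[OF assms(1,2)])
  fix p show "F (bas p) = G (bas p)"
    using assms(3)[of "bas (fst p)" "bas (snd p)"] by (simp add: tens_bas)
qed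

lemma tmap_comp:
  assumes f: "klinear f" and g: "klinear g"
  shows "tmap f g (tmap f' g' x) = tmap (\<lambda>v. f (f' v)) (\<lambda>v. g (g' v)) x"
proof (rule lin_ext[where f="\<lambda>x. tmap f g (tmap f' g' x)"])
  show "klinear (\<lambda>x. tmap f g (tmap f' g' x))" by (simp add: klinear_def lsimps)
  fix p show "tmap f g (tmap f' g' (bas p)) = tmap (\<lambda>v. f (f' v)) (\<lambda>v. g (g' v)) (bas p)"
    using tmap_bas[of f' g' "fst p" "snd p"] tmap_bas[of "\<lambda>v. f (f' v)" "\<lambda>v. g (g' v)" "fst p" "snd p"]
    by (simp add: tmap_tens[OF f g])
qed simp

lemma tmap_id: "tmap (\<lambda>v. v) (\<lambda>v. v) x = x"
proof (rule lin_ext[where f="tmap (\<lambda>v. v) (\<lambda>v. v)" and g="\<lambda>v. v"])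
  fix p show "tmap (\<lambda>v. v) (\<lambda>v. v) (bas p) = bas p"
    by (cases p) (simp add: tmap_bas tens_bas)
qed simp_all

lemma tmap_id'[simp]: "tmap id id x = x" "tmap (\<lambda>v. v) id x = x" "tmap id (\<lambda>v. v) x = x"
  using tmap_id[of x] by (simp_all add: id_def)

lemma tmap_fun_add1: "tmap (\<lambda>v. f v + f' v) g x = tmap f g x + tmap f' g x"
proof -
  have "(\<lambda>(i, j). tens (f (bas i) + f' (bas i)) (g (bas j)))
     = (\<lambda>p. (\<lambda>(i, j). tens (f (bas i)) (g (bas j))) p + (\<lambda>(i, j). tens (f' (bas i)) (g (bas j))) p)"
    by (auto simp: fun_eq_iff tens_add1)
  then show ?thesis unfolding tmap_def by (simp add: lin_fun_add)
qed

lemma tmap_fun_smult1: "tmap (\<lambda>v. smult c (f v)) g x = smult c (tmap f g x)"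
proof -
  have "(\<lambda>(i, j). tens (smult c (f (bas i))) (g (bas j)))
     = (\<lambda>p. smult c ((\<lambda>(i, j). tens (f (bas i)) (g (bas j))) p))"
    by (auto simp: fun_eq_iff tens_smult1)
  then show ?thesis unfolding tmap_def by (simp add: lin_fun_smult)
qed

lemma tmap_r_tens:
  assumes f: "klinear f" and e: "kfunctional e"
  shows "tmap_r f e (tens v w) = smult (e w) (f v)"
proof -
  have hb: "tmap_r f e (tens (bas i) w) = smult (e w) (f (bas i))" for i
    by (rule lin_ext[where f="\<lambda>w. tmap_r f e (tens (bas i) w)" and g="\<lambda>w. smult (e w) (f (bas i))"])
       (use e in \<open>simp_all add: klinear_def kfunctional_def lsimps tens_bas tmap_r_def smult_add2\<close>)
  show ?thesis
    by (rule lin_ext[where f="\<lambda>v. tmap_r f e (tens v w)" and g="\<lambda>v. smult (e w) (f v)"])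
       (use f hb in \<open>simp_all add: klinear_def lsimps mult.commute\<close>)
qed

lemma tmap_r_tmap:
  assumes f: "klinear f" and e: "kfunctional e"
  shows "tmap_r id e (tmap f id u) = f (tmap_r id e u)"
  by (rule lin_ext_tens[where F="\<lambda>u. tmap_r id e (tmap f id u)" and G="\<lambda>u. f (tmap_r id e u)"])
     (use f e in \<open>simp_all add: klinear_def lsimps tmap_tens tmap_r_tens\<close>)

lemma mult_AY_tens:
  assumes "klinear m1" "klinear m2"
  shows "mult_AY m1 m2 (tens a y) (tens a' y') = tens (m1 (tens a a')) (m2 (tens y y'))"
  unfolding mult_AY_def by (simp add: tmap_tens assms)

lemma mult_AY_add1: "mult_AY m1 m2 (v + v') w = mult_AY m1 m2 v w + mult_AY m1 m2 v' w"
  and mult_AY_add2: "mult_AY m1 m2 v (w + w') = mult_AY m1 m2 v w + mult_AY m1 m2 v w'"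
  and mult_AY_smult1: "mult_AY m1 m2 (smult c v) w = smult c (mult_AY m1 m2 v w)"
  and mult_AY_smult2: "mult_AY m1 m2 v (smult c w) = smult c (mult_AY m1 m2 v w)"
  unfolding mult_AY_def by (simp_all add: lsimps)

lemmas lsimps2 = lsimps mult_AY_add1 mult_AY_add2 mult_AY_smult1 mult_AY_smult2 tmap_fun_add1 tmap_fun_smult1


context
  fixes mA :: "('a \<times> 'a \<Rightarrow>\<^sub>0 'k::field) \<Rightarrow> ('a \<Rightarrow>\<^sub>0 'k)"
    and uA :: "'a \<Rightarrow>\<^sub>0 'k"
    and DA :: "('a \<Rightarrow>\<^sub>0 'k) \<Rightarrow> ('a \<times> 'a \<Rightarrow>\<^sub>0 'k)"
    and eA :: "('a \<Rightarrow>\<^sub>0 'k) \<Rightarrow> 'k"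
    and SA :: "('a \<Rightarrow>\<^sub>0 'k) \<Rightarrow> ('a \<Rightarrow>\<^sub>0 'k)"
    and mY :: "('y \<times> 'y \<Rightarrow>\<^sub>0 'k) \<Rightarrow> ('y \<Rightarrow>\<^sub>0 'k)"
    and uY :: "'y \<Rightarrow>\<^sub>0 'k"
    and DY :: "('y \<Rightarrow>\<^sub>0 'k) \<Rightarrow> ('y \<times> 'y \<Rightarrow>\<^sub>0 'k)"
    and eY :: "('y \<Rightarrow>\<^sub>0 'k) \<Rightarrow> 'k"
    and SY :: "('y \<Rightarrow>\<^sub>0 'k) \<Rightarrow> ('y \<Rightarrow>\<^sub>0 'k)"
    and \<rho> :: "('y \<Rightarrow>\<^sub>0 'k) \<Rightarrow> ('a \<times> 'y \<Rightarrow>\<^sub>0 'k)"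
  assumes HA: "hopf_algebra mA uA DA eA SA"
    and HY: "hopf_algebra mY uY DY eY SY"
    and rl: "klinear \<rho>"
begin

abbreviation "T \<equiv> Tmap mA mY uY \<rho>"

lemma mAl: "klinear mA" and DAl: "klinear DA" and mYl: "klinear mY" and DYl: "klinear DY"
  and eYf: "kfunctional eY"
  using HA HY by (simp_all add: hopf_algebra_def)

lemmas mA_add = klinear_add[OF mAl] and mA_smult = klinear_smult[OF mAl]
lemmas DA_add = klinear_add[OF DAl] and DA_smult = klinear_smult[OF DAl]
lemmas mY_add = klinear_add[OF mYl] and mY_smult = klinear_smult[OF mYl]
lemmas DY_add = klinear_add[OF DYl] and DY_smult = klinear_smult[OF DYl]
lemmas rho_add = klinear_add[OF rl] and rho_smult = klinear_smult[OF rl]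
lemma eY_add: "eY (v + w) = eY v + eY w" and eY_smult: "eY (smult c v) = c * eY v"
  using eYf by (simp_all add: kfunctional_def)

lemmas hsimps = lsimps2 mA_add mA_smult DA_add DA_smult mY_add mY_smult DY_add DY_smult
  rho_add rho_smult eY_add eY_smult

lemma mA_assoc: "mA (tens (mA (tens a b)) c) = mA (tens a (mA (tens b c)))"
proof -
  have "mA (tmap mA id (tens (tens a b) c)) = mA (tmap id mA (assoc_r (tens (tens a b) c)))"
    using HA by (simp add: hopf_algebra_def)
  then show ?thesis by (simp add: tmap_tens mAl)
qed

lemma mA_unit: "mA (tens uA v) = v" "mA (tens v uA) = v"
  using HA by (simp_all add: hopf_algebra_def)
lemma mY_unit: "mY (tens v uY) = v"
  using HY by (simp_all add: hopf_algebra_def)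
lemma DA_mult: "DA (mA (tens v w)) = mult_AY mA mA (DA v) (DA w)"
  using HA by (simp add: hopf_algebra_def mult_AY_def)
lemma DA_unit: "DA uA = tens uA uA"
  using HA by (simp add: hopf_algebra_def)

lemma klinear_r[simp]: "klinear (\<lambda>b. mA (tens b a))"
  by (simp add: klinear_def hsimps)
lemma klinear_multAA[simp]: "klinear (\<lambda>p. mult_AY mA mA p d)"
  by (simp add: klinear_def hsimps)

lemma multAY_unit: "mult_AY mA mY w (tens a uY) = tmap (\<lambda>b. mA (tens b a)) id w"
  by (rule lin_ext_tens[where F="\<lambda>w. mult_AY mA mY w (tens a uY)"])
     (simp_all add: klinear_def hsimps mult_AY_tens mAl mYl mY_unit tmap_tens)

lemma T_tens: "T (tens y a) = tmap (\<lambda>b. mA (tens b a)) id (\<rho> y)"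
proof -
  have "T (tens y a) = mult_AY mA mY (\<rho> y) (tens a uY)"
  proof (rule lin_ext[where f="\<lambda>y. T (tens y a)" and g="\<lambda>y. mult_AY mA mY (\<rho> y) (tens a uY)"])
    fix j
    show "T (tens (bas j) a) = mult_AY mA mY (\<rho> (bas j)) (tens a uY)"
      by (rule lin_ext[where f="\<lambda>a. T (tens (bas j) a)" and g="\<lambda>a. mult_AY mA mY (\<rho> (bas j)) (tens a uY)"])
         (simp_all add: klinear_def hsimps tens_bas Tmap_def)
  qed (simp_all add: klinear_def hsimps)
  then show ?thesis by (simp add: multAY_unit)
qed


lemma klinear_T[simp]: "klinear T" by simp

lemma s1: "assoc_r (tens (tmap (\<lambda>x. mA (tens x (mA (tens b a)))) id u1) z)
   = tmap (\<lambda>x. mA (tens x a)) id (tmap mA id (relabel (\<lambda>((a, b), (c, d)). ((a, c), (b, d))) (tens u1 (tens b z))))"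
  by (rule lin_ext_tens[where F="\<lambda>u1. assoc_r (tens (tmap (\<lambda>x. mA (tens x (mA (tens b a)))) id u1) z)"
     and G="\<lambda>u1. tmap (\<lambda>x. mA (tens x a)) id (tmap mA id (relabel (\<lambda>((a, b), (c, d)). ((a, c), (b, d))) (tens u1 (tens b z))))"])
     (simp_all add: klinear_def hsimps tmap_tens mAl mA_assoc)

lemma s2: "assoc_r (tmap T id (assoc_l (tens y1 (tmap (\<lambda>x. mA (tens x a)) id u2))))
   = tmap (\<lambda>x. mA (tens x a)) id (tmap mA id (relabel (\<lambda>((a, b), (c, d)). ((a, c), (b, d))) (tens (\<rho> y1) u2)))"
  by (rule lin_ext_tens[where F="\<lambda>u2. assoc_r (tmap T id (assoc_l (tens y1 (tmap (\<lambda>x. mA (tens x a)) id u2))))"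
    and G="\<lambda>u2. tmap (\<lambda>x. mA (tens x a)) id (tmap mA id (relabel (\<lambda>((a, b), (c, d)). ((a, c), (b, d))) (tens (\<rho> y1) u2)))"])
     (simp_all add: klinear_def hsimps tmap_tens T_tens s1)

lemma s3: "assoc_r (tmap T id (assoc_l (tmap id T (assoc_r (tens w a)))))
   = tmap (\<lambda>x. mA (tens x a)) id (tmap mA id (relabel (\<lambda>((a, y), (a', y')). ((a, a'), (y, y'))) (tmap \<rho> \<rho> w)))"
  by (rule lin_ext_tens[where F="\<lambda>w. assoc_r (tmap T id (assoc_l (tmap id T (assoc_r (tens w a)))))"
    and G="\<lambda>w. tmap (\<lambda>x. mA (tens x a)) id (tmap mA id (relabel (\<lambda>((a, y), (a', y')). ((a, a'), (y, y'))) (tmap \<rho> \<rho> w)))"])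
     (simp_all add: klinear_def hsimps tmap_tens T_tens s2 rl)

lemma K3: "assoc_r (tmap T id (assoc_l (tmap id T (assoc_r (tmap DY id (tens y a))))))
   = tmap (\<lambda>x. mA (tens x a)) id (tmap mA id (relabel (\<lambda>((a, y), (a', y')). ((a, a'), (y, y'))) (tmap \<rho> \<rho> (DY y))))"
  by (simp add: tmap_tens DYl s3)

lemma L3: "tmap id DY (T (tens y a)) = tmap (\<lambda>x. mA (tens x a)) id (tmap id DY (\<rho> y))"
  by (simp add: T_tens tmap_comp DYl)


lemma klinear_E'[simp]: "klinear (\<lambda>v. tmap_r id eY (T v))" by (simp add: klinear_def hsimps)
lemma klinear_F'[simp]: "klinear (\<lambda>v. assoc_r (tmap DA id (T v)))" by (simp add: klinear_def hsimps)
lemma klinear_E[simp]: "klinear (\<lambda>v. tmap_r id eY (\<rho> v))" by (simp add: klinear_def hsimps)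
lemma klinear_F[simp]: "klinear (\<lambda>v. assoc_r (tmap DA id (\<rho> v)))" by (simp add: klinear_def hsimps)

lemma t3: "tens (mA (tens b d1)) (tmap (\<lambda>x. mA (tens x d2)) id u')
   = assoc_r (tmap (\<lambda>p. mult_AY mA mA p (tens d1 d2)) id (assoc_l (tens b u')))"
  by (rule lin_ext_tens[where F="\<lambda>u'. tens (mA (tens b d1)) (tmap (\<lambda>x. mA (tens x d2)) id u')"
     and G="\<lambda>u'. assoc_r (tmap (\<lambda>p. mult_AY mA mA p (tens d1 d2)) id (assoc_l (tens b u')))"])
     (simp_all add: klinear_def hsimps tmap_tens mult_AY_tens mAl)

lemma t2: "tmap id T (assoc_r (tens (tmap (\<lambda>x. mA (tens x d1)) id u) d2))
   = assoc_r (tmap (\<lambda>p. mult_AY mA mA p (tens d1 d2)) id (assoc_l (tmap id \<rho> u)))"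
  by (rule lin_ext_tens[where F="\<lambda>u. tmap id T (assoc_r (tens (tmap (\<lambda>x. mA (tens x d1)) id u) d2))"
     and G="\<lambda>u. assoc_r (tmap (\<lambda>p. mult_AY mA mA p (tens d1 d2)) id (assoc_l (tmap id \<rho> u)))"])
     (simp_all add: klinear_def hsimps tmap_tens rl T_tens t3)

lemma t1: "tmap id T (assoc_r (tmap T id (assoc_l (tens y d))))
   = assoc_r (tmap (\<lambda>p. mult_AY mA mA p d) id (assoc_l (tmap id \<rho> (\<rho> y))))"
  by (rule lin_ext_tens[where F="\<lambda>d. tmap id T (assoc_r (tmap T id (assoc_l (tens y d))))"
     and G="\<lambda>d. assoc_r (tmap (\<lambda>p. mult_AY mA mA p d) id (assoc_l (tmap id \<rho> (\<rho> y))))"])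
     (simp_all add: klinear_def hsimps tmap_tens T_tens t2)

lemma K4L: "tmap id T (assoc_r (tmap T id (assoc_l (tmap id DA (tens y a)))))
   = assoc_r (tmap (\<lambda>p. mult_AY mA mA p (DA a)) id (assoc_l (tmap id \<rho> (\<rho> y))))"
  by (simp add: tmap_tens DAl t1)

lemma q3a: "tmap (\<lambda>v. tmap_r id eY (T v)) id (assoc_l (tens y1 (assoc_r (tens (mult_AY mA mA (tens e1 e2) d) z))))
   = assoc_r (tmap (\<lambda>p. mult_AY mA mA p d) id (assoc_l (tmap mA id (assoc_l (tens (tmap_r id eY (\<rho> y1)) (assoc_r (tens (tens e1 e2) z)))))))"
  by (rule lin_ext_tens[where F="\<lambda>d. tmap (\<lambda>v. tmap_r id eY (T v)) id (assoc_l (tens y1 (assoc_r (tens (mult_AY mA mA (tens e1 e2) d) z))))"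
     and G="\<lambda>d. assoc_r (tmap (\<lambda>p. mult_AY mA mA p d) id (assoc_l (tmap mA id (assoc_l (tens (tmap_r id eY (\<rho> y1)) (assoc_r (tens (tens e1 e2) z)))))))"])
     (simp_all add: klinear_def hsimps tmap_tens mult_AY_tens mAl T_tens tmap_r_tmap eYf mA_assoc)

lemma q3: "tmap (\<lambda>v. tmap_r id eY (T v)) id (assoc_l (tens y1 (assoc_r (tens (mult_AY mA mA e d) z))))
   = assoc_r (tmap (\<lambda>p. mult_AY mA mA p d) id (assoc_l (tmap mA id (assoc_l (tens (tmap_r id eY (\<rho> y1)) (assoc_r (tens e z)))))))"
  by (rule lin_ext_tens[where F="\<lambda>e. tmap (\<lambda>v. tmap_r id eY (T v)) id (assoc_l (tens y1 (assoc_r (tens (mult_AY mA mA e d) z))))"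
     and G="\<lambda>e. assoc_r (tmap (\<lambda>p. mult_AY mA mA p d) id (assoc_l (tmap mA id (assoc_l (tens (tmap_r id eY (\<rho> y1)) (assoc_r (tens e z)))))))"])
     (simp_all add: klinear_def hsimps q3a)

lemma q2: "tmap (\<lambda>v. tmap_r id eY (T v)) id (assoc_l (tens y1 (assoc_r (tmap DA id (tmap (\<lambda>x. mA (tens x a)) id u2)))))
   = assoc_r (tmap (\<lambda>p. mult_AY mA mA p (DA a)) id (assoc_l (tmap mA id (assoc_l (tens (tmap_r id eY (\<rho> y1)) (assoc_r (tmap DA id u2)))))))"
  by (rule lin_ext_tens[where F="\<lambda>u2. tmap (\<lambda>v. tmap_r id eY (T v)) id (assoc_l (tens y1 (assoc_r (tmap DA id (tmap (\<lambda>x. mA (tens x a)) id u2)))))"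
     and G="\<lambda>u2. assoc_r (tmap (\<lambda>p. mult_AY mA mA p (DA a)) id (assoc_l (tmap mA id (assoc_l (tens (tmap_r id eY (\<rho> y1)) (assoc_r (tmap DA id u2)))))))"])
     (simp_all add: klinear_def hsimps tmap_tens DAl DA_mult q3)

lemma q1: "tmap (\<lambda>v. tmap_r id eY (T v)) id (assoc_l (tmap id (\<lambda>v. assoc_r (tmap DA id (T v))) (assoc_r (tens w a))))
   = assoc_r (tmap (\<lambda>p. mult_AY mA mA p (DA a)) id (assoc_l (tmap mA id (assoc_l (tmap (\<lambda>v. tmap_r id eY (\<rho> v)) (\<lambda>v. assoc_r (tmap DA id (\<rho> v))) w)))))"
  by (rule lin_ext_tens[where F="\<lambda>w. tmap (\<lambda>v. tmap_r id eY (T v)) id (assoc_l (tmap id (\<lambda>v. assoc_r (tmap DA id (T v))) (assoc_r (tens w a))))"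
     and G="\<lambda>w. assoc_r (tmap (\<lambda>p. mult_AY mA mA p (DA a)) id (assoc_l (tmap mA id (assoc_l (tmap (\<lambda>v. tmap_r id eY (\<rho> v)) (\<lambda>v. assoc_r (tmap DA id (\<rho> v))) w)))))"])
     (simp_all add: klinear_def hsimps tmap_tens T_tens q2)

lemma K4R: "tmap (\<lambda>v. tmap_r id eY (T v)) id (assoc_l (tmap id (\<lambda>v. assoc_r (tmap DA id (T v))) (assoc_r (tmap DY id (tens y a)))))
   = assoc_r (tmap (\<lambda>p. mult_AY mA mA p (DA a)) id (assoc_l (tmap mA id (assoc_l (tmap (\<lambda>v. tmap_r id eY (\<rho> v)) (\<lambda>v. assoc_r (tmap DA id (\<rho> v))) (DY y))))))"
  by (simp add: tmap_tens DYl q1)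

lemma multAA_unit: "mult_AY mA mA p (tens uA uA) = p"
  by (rule lin_ext_tens[where F="\<lambda>p. mult_AY mA mA p (tens uA uA)" and G="\<lambda>p. p"])
     (simp_all add: klinear_def hsimps mult_AY_tens mAl mA_unit)

lemma Phi_unit: "assoc_r (tmap (\<lambda>p. mult_AY mA mA p (DA uA)) id (assoc_l z)) = z"
  by (simp add: DA_unit multAA_unit)

lemma runit: "tmap (\<lambda>x. mA (tens x uA)) id z = z"
  by (simp add: mA_unit)

end

theorem proposition3p8:
  fixes mA :: "('a \<times> 'a \<Rightarrow>\<^sub>0 'k::field) \<Rightarrow> ('a \<Rightarrow>\<^sub>0 'k)"
    and uA :: "'a \<Rightarrow>\<^sub>0 'k"
    and DA :: "('a \<Rightarrow>\<^sub>0 'k) \<Rightarrow> ('a \<times> 'a \<Rightarrow>\<^sub>0 'k)"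
    and eA :: "('a \<Rightarrow>\<^sub>0 'k) \<Rightarrow> 'k"
    and SA :: "('a \<Rightarrow>\<^sub>0 'k) \<Rightarrow> ('a \<Rightarrow>\<^sub>0 'k)"
    and mY :: "('y \<times> 'y \<Rightarrow>\<^sub>0 'k) \<Rightarrow> ('y \<Rightarrow>\<^sub>0 'k)"
    and uY :: "'y \<Rightarrow>\<^sub>0 'k"
    and DY :: "('y \<Rightarrow>\<^sub>0 'k) \<Rightarrow> ('y \<times> 'y \<Rightarrow>\<^sub>0 'k)"
    and eY :: "('y \<Rightarrow>\<^sub>0 'k) \<Rightarrow> 'k"
    and SY :: "('y \<Rightarrow>\<^sub>0 'k) \<Rightarrow> ('y \<Rightarrow>\<^sub>0 'k)"
    and \<rho> :: "('y \<Rightarrow>\<^sub>0 'k) \<Rightarrow> ('a \<times> 'y \<Rightarrow>\<^sub>0 'k)"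
  assumes "hopf_algebra mA uA DA eA SA"
    and "hopf_algebra mY uY DY eY SY"
    and "klinear \<rho>"
  shows "partial_comodule_coalgebra_hopf mA DA eA DY eY \<rho> \<longleftrightarrow>
         partial_comodule_coalgebra_mult mA uA DA eA mY uY DY eY \<rho>"
proof -
  note L3 = L3[OF assms] and K3 = K3[OF assms] and K4L = K4L[OF assms] and K4R = K4R[OF assms]
    and Phi_unit = Phi_unit[OF assms] and runit = runit[OF assms]
  let ?T = "Tmap mA mY uY \<rho>"
  let ?H2 = "\<forall>y. tmap id DY (\<rho> y) =
        tmap mA id (relabel (\<lambda>((a, y), (a', y')). ((a, a'), (y, y'))) (tmap \<rho> \<rho> (DY y)))"
  let ?M3 = "\<forall>x. tmap id DY (?T x) =
        assoc_r (tmap ?T id (assoc_l (tmap id ?T (assoc_r (tmap DY id x)))))"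
  let ?H3 = "\<forall>y. tmap id \<rho> (\<rho> y) =
        tmap mA id (assoc_l
          (tmap (\<lambda>v. tmap_r id eY (\<rho> v)) (\<lambda>v. assoc_r (tmap DA id (\<rho> v))) (DY y)))"
  let ?M4 = "\<forall>x. tmap id ?T (assoc_r (tmap ?T id (assoc_l (tmap id DA x)))) =
        tmap (\<lambda>v. tmap_r id eY (?T v)) id
          (assoc_l (tmap id (\<lambda>v. assoc_r (tmap DA id (?T v))) (assoc_r (tmap DY id x))))"
  have e2: "?H2 \<longleftrightarrow> ?M3"
  proof
    assume h: ?H2
    show ?M3
    proof
      fix x
      show "tmap id DY (?T x) = assoc_r (tmap ?T id (assoc_l (tmap id ?T (assoc_r (tmap DY id x)))))"
        by (rule lin_ext_tens[where F="\<lambda>x. tmap id DY (?T x)"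
            and G="\<lambda>x. assoc_r (tmap ?T id (assoc_l (tmap id ?T (assoc_r (tmap DY id x)))))"])
           (simp_all add: klinear_def lsimps2 L3 K3 h)
    qed
  next
    assume h: ?M3
    show ?H2
    proof
      fix y
      from h have "tmap id DY (?T (tens y uA)) = assoc_r (tmap ?T id (assoc_l (tmap id ?T (assoc_r (tmap DY id (tens y uA))))))"
        by blast
      then show "tmap id DY (\<rho> y) =
        tmap mA id (relabel (\<lambda>((a, y), (a', y')). ((a, a'), (y, y'))) (tmap \<rho> \<rho> (DY y)))"
        by (simp only: L3 K3 runit)
    qed
  qed
  have e3: "?H3 \<longleftrightarrow> ?M4"
  proof
    assume h: ?H3
    show ?M4
    proof
      fix x
      show "tmap id ?T (assoc_r (tmap ?T id (assoc_l (tmap id DA x)))) =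
        tmap (\<lambda>v. tmap_r id eY (?T v)) id
          (assoc_l (tmap id (\<lambda>v. assoc_r (tmap DA id (?T v))) (assoc_r (tmap DY id x))))"
        by (rule lin_ext_tens[where F="\<lambda>x. tmap id ?T (assoc_r (tmap ?T id (assoc_l (tmap id DA x))))"
            and G="\<lambda>x. tmap (\<lambda>v. tmap_r id eY (?T v)) id
              (assoc_l (tmap id (\<lambda>v. assoc_r (tmap DA id (?T v))) (assoc_r (tmap DY id x))))"])
           (simp_all add: klinear_def lsimps2 K4L K4R h)
    qed
  next
    assume h: ?M4
    show ?H3
    proof
      fix y
      from h have "tmap id ?T (assoc_r (tmap ?T id (assoc_l (tmap id DA (tens y uA))))) =
        tmap (\<lambda>v. tmap_r id eY (?T v)) id
          (assoc_l (tmap id (\<lambda>v. assoc_r (tmap DA id (?T v))) (assoc_r (tmap DY id (tens y uA)))))"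
        by blast
      then show "tmap id \<rho> (\<rho> y) =
        tmap mA id (assoc_l
          (tmap (\<lambda>v. tmap_r id eY (\<rho> v)) (\<lambda>v. assoc_r (tmap DA id (\<rho> v))) (DY y)))"
        by (simp only: K4L K4R Phi_unit)
    qed
  qed
  show ?thesis
    unfolding partial_comodule_coalgebra_hopf_def partial_comodule_coalgebra_mult_def Let_def
    using e2 e3 by simp
qed

end
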